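(* Let $P\subset\mathbb{R}^d$ be a full-dimensional lattice polytope with codegree $a$ satisfying $P=\lfloor aP\rfloor+\{P\}$. Then there exists an integer $K\ge1$ (depending on $P$) such that for every integer $k\ge K$ the polytope $kP$ is nearly Gorenstein.
   Context: $\mathbf{k}$ is an infinite field. $P$ has facet presentation $P=\{x: n_F(x)\ge -h_F\ \forall \text{ facets } F\}$ with $n_F\in(\mathbb{Z}^d)^*$ primitive inner normals and $h_F\in\mathbb{Z}$. The codegree is $a=\min\{k\in\mathbb{Z}_{\ge1}: \mathrm{int}(kP)\cap\mathbb{Z}^d\ne\varnothing\}$. For a lattice polytope $Q$, $\lfloor Q\rfloor=\mathrm{conv}(\mathrm{int}(Q)\cap\mathbb{Z}^d)$. The remainder polytope is $\{P\}=\mathrm{conv}\{x\in\mathbb{Z}^d: n_F(x)\ge (a-1)h_F-1\ \forall F\}$. $+$ denotes Minkowski sum. A lattice polytope $Q$ is nearly Gorenstein if its Ehrhart ring $A(Q)=\mathbf{k}[\mathbf{t}^xs^k: k\in\mathbb{N}, x\in kQ\cap\mathbb{Z}^d]$ (graded by $k$, graded maximal ideal $\mathbf{m}$, canonical module $\omega$) satisfies $\mathbf{m}\subseteq \mathrm{tr}(\omega)=\sum_{\phi\in\mathrm{Hom}(\omega,A(Q))}\phi(\omega)$. *)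

theory Defs
  imports "HOL-Analysis.Analysis"
begin

definition lat :: "int ^ 'd \<Rightarrow> real ^ 'd" where
  "lat z = (\<chi> i. real_of_int (z $ i))"

definition lattice_points :: "(real ^ 'd) set" where
  "lattice_points = range lat"

definition lattice_polytope :: "(real ^ 'd) set \<Rightarrow> bool" where
  "lattice_polytope P \<longleftrightarrow> (\<exists>V. finite V \<and> V \<subseteq> lattice_points \<and> P = convex hull V)"

definition dil :: "real \<Rightarrow> (real ^ 'd) set \<Rightarrow> (real ^ 'd) set" where
  "dil c Q = (\<lambda>x. c *\<^sub>R x) ` Q"

definition minkowski_sum :: "(real ^ 'd) set \<Rightarrow> (real ^ 'd) set \<Rightarrow> (real ^ 'd) set" where
  "minkowski_sum A B = {x + y | x y. x \<in> A \<and> y \<in> B}"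

definition pair :: "int ^ 'd \<Rightarrow> real ^ 'd \<Rightarrow> real" where
  "pair n x = (\<Sum>i\<in>UNIV. real_of_int (n $ i) * x $ i)"

definition primitive :: "int ^ 'd \<Rightarrow> bool" where
  "primitive n \<longleftrightarrow> (\<forall>m::int. (\<forall>i. m dvd n $ i) \<longrightarrow> \<bar>m\<bar> = 1)"

definition codegree :: "(real ^ 'd) set \<Rightarrow> nat" where
  "codegree P = (LEAST k::nat. k \<ge> 1 \<and> interior (dil (real k) P) \<inter> lattice_points \<noteq> {})"

definition lfloor_poly :: "(real ^ 'd) set \<Rightarrow> (real ^ 'd) set" where
  "lfloor_poly Q = convex hull (interior Q \<inter> lattice_points)"

text \<open>remainder polytope {P} for facet data (I, n, h) and codegree a\<close>
definition remainder_poly :: "'f set \<Rightarrow> ('f \<Rightarrow> int ^ 'd) \<Rightarrow> ('f \<Rightarrow> int) \<Rightarrow> nat \<Rightarrow> (real ^ 'd) set" where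
  "remainder_poly I n h a = convex hull
     {x \<in> lattice_points. \<forall>F\<in>I. pair (n F) x \<ge> real_of_int ((int a - 1) * h F - 1)}"

section \<open>Ehrhart ring, realised as finitely supported functions on Z^d x Z\<close>

type_synonym 'd mon = "(int ^ 'd) \<times> int"

definition supp :: "('d mon \<Rightarrow> 'k::zero) \<Rightarrow> 'd mon set" where
  "supp f = {u. f u \<noteq> 0}"

text \<open>monomials t^x s^k with x in kP\<close>
definition ehr_monoid :: "(real ^ 'd) set \<Rightarrow> 'd mon set" where
  "ehr_monoid Q = {(z, k). k \<ge> 0 \<and> lat z \<in> dil (real_of_int k) Q}"

definition ehr_interior :: "(real ^ 'd) set \<Rightarrow> 'd mon set" where
  "ehr_interior Q = {(z, k). k \<ge> 1 \<and> lat z \<in> interior (dil (real_of_int k) Q)}"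

definition ehrhart_ring :: "'k::field itself \<Rightarrow> (real ^ 'd) set \<Rightarrow> ('d mon \<Rightarrow> 'k) set" where
  "ehrhart_ring T Q = {f. finite (supp f) \<and> supp f \<subseteq> ehr_monoid Q}"

text \<open>multiplication in the semigroup ring (convolution)\<close>
definition conv :: "(('d::finite) mon \<Rightarrow> 'k::field) \<Rightarrow> ('d mon \<Rightarrow> 'k) \<Rightarrow> ('d mon \<Rightarrow> 'k)" where
  "conv f g = (\<lambda>(z, k). \<Sum>v\<in>supp f. f v * g (z - fst v, k - snd v))"

definition max_ideal :: "'k::field itself \<Rightarrow> (real ^ 'd) set \<Rightarrow> ('d mon \<Rightarrow> 'k) set" where
  "max_ideal T Q = {f \<in> ehrhart_ring T Q. \<forall>u\<in>supp f. snd u \<ge> 1}"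

text \<open>canonical module of the (normal) Ehrhart ring: the ideal spanned by the
  monomials in the interior of the cone (Danilov--Stanley)\<close>
definition canonical_module :: "'k::field itself \<Rightarrow> (real ^ 'd) set \<Rightarrow> ('d mon \<Rightarrow> 'k) set" where
  "canonical_module T Q = {f \<in> ehrhart_ring T Q. supp f \<subseteq> ehr_interior Q}"

definition hom_omega :: "'k::field itself \<Rightarrow> (real ^ 'd) set \<Rightarrow>
    (('d mon \<Rightarrow> 'k) \<Rightarrow> ('d mon \<Rightarrow> 'k)) set" where
  "hom_omega T Q = {\<phi>.
     (\<forall>f\<in>canonical_module T Q. \<phi> f \<in> ehrhart_ring T Q) \<and>
     (\<forall>f\<in>canonical_module T Q. \<forall>g\<in>canonical_module T Q. \<phi> (\<lambda>u. f u + g u) = (\<lambda>u. \<phi> f u + \<phi> g u)) \<and>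
     (\<forall>a\<in>ehrhart_ring T Q. \<forall>f\<in>canonical_module T Q. \<phi> (conv a f) = conv a (\<phi> f))}"

definition trace_omega :: "'k::field itself \<Rightarrow> (real ^ 'd) set \<Rightarrow> ('d mon \<Rightarrow> 'k) set" where
  "trace_omega T Q = {f. \<exists>(m::nat) \<phi>s fs.
     (\<forall>i<m. \<phi>s i \<in> hom_omega T Q \<and> fs i \<in> canonical_module T Q) \<and>
     f = (\<lambda>u. \<Sum>i<m. \<phi>s i (fs i) u)}"

definition nearly_gorenstein :: "'k::field itself \<Rightarrow> (real ^ 'd) set \<Rightarrow> bool" where
  "nearly_gorenstein T Q \<longleftrightarrow> max_ideal T Q \<subseteq> trace_omega T Q"

end

theory Submission
  imports Defs
begin


lemma pair_inner: "pair n x = inner (lat n) x"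
  by (simp add: pair_def lat_def inner_vec_def)

lemma pair_lat: "pair n (lat z) = real_of_int (\<Sum>i\<in>UNIV. n $ i * z $ i)"
  by (simp add: pair_def lat_def)

lemma lat_add: "lat (a + b) = lat a + lat b"
  by (simp add: lat_def vec_eq_iff)
lemma lat_diff: "lat (a - b) = lat a - lat b"
  by (simp add: lat_def vec_eq_iff)
lemma lat_smult: "lat (c *s a) = real_of_int c *\<^sub>R lat a"
  by (simp add: lat_def vec_eq_iff)

lemma prim_nz: "primitive n \<Longrightarrow> lat n \<noteq> 0"
proof
  assume p: "primitive n" and z: "lat n = 0"
  have "\<forall>i. n $ i = 0" using z by (simp add: lat_def vec_eq_iff)
  then have "\<forall>i. (2::int) dvd n $ i" by simp
  with p show False unfolding primitive_def by fastforce
qed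

lemma interior_strict:
  assumes nz: "lat n \<noteq> 0" and x: "x \<in> interior S" and S: "S \<subseteq> {y. t \<le> pair n y}"
  shows "t < pair n x"
proof -
  obtain e where e: "e > 0" "ball x e \<subseteq> S" using x by (meson mem_interior)
  define v where "v = lat n"
  have nv: "norm v > 0" using nz v_def by simp
  define y where "y = x - (e / 2 / norm v) *\<^sub>R v"
  have "dist x y = e/2" using nv e by (simp add: y_def dist_norm)
  then have "y \<in> S" using e by auto
  then have "t \<le> pair n y" using S by auto
  also have "pair n y = pair n x - (e/2/norm v) * (v \<bullet> v)"
    by (simp add: pair_inner y_def v_def inner_diff_right)
  also have "v \<bullet> v = norm v * norm v" by (simp add: power2_eq_square[symmetric] dot_square_norm)
  finally have "t \<le> pair n x - e/2 * norm v" using nv by simp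
  moreover have "e/2 * norm v > 0" using e nv by simp
  ultimately show ?thesis by linarith
qed

lemma dil_char:
  assumes pres: "P = {x. \<forall>F\<in>I. pair (n F) x \<ge> - real_of_int (h F)}" and t: "t > 0"
  shows "x \<in> dil t P \<longleftrightarrow> (\<forall>F\<in>I. pair (n F) x \<ge> - t * real_of_int (h F))"
proof
  assume "x \<in> dil t P"
  then obtain p where p: "p \<in> P" "x = t *\<^sub>R p" by (auto simp: dil_def)
  show "\<forall>F\<in>I. pair (n F) x \<ge> - t * real_of_int (h F)"
  proof
    fix F assume F: "F \<in> I"
    have "pair (n F) p \<ge> - real_of_int (h F)" using p pres F by auto
    then have "t * pair (n F) p \<ge> t * (- real_of_int (h F))" using mult_left_mono[of "- real_of_int (h F)" "pair (n F) p" t] t by simp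
    then show "pair (n F) x \<ge> - t * real_of_int (h F)" using p by (simp add: pair_inner)
  qed
next
  assume H: "\<forall>F\<in>I. pair (n F) x \<ge> - t * real_of_int (h F)"
  have "(1/t) *\<^sub>R x \<in> P" unfolding pres
  proof (safe)
    fix F assume F: "F \<in> I"
    have "pair (n F) ((1/t) *\<^sub>R x) = pair (n F) x / t" by (simp add: pair_inner)
    also have "\<dots> \<ge> (- t * real_of_int (h F)) / t" using divide_right_mono[of "- t * real_of_int (h F)" "pair (n F) x" t] H F t by simp
    finally show "pair (n F) ((1/t) *\<^sub>R x) \<ge> - real_of_int (h F)" using t by simp
  qed
  moreover have "x = t *\<^sub>R ((1/t) *\<^sub>R x)" using t by simp
  ultimately show "x \<in> dil t P" unfolding dil_def by blast
qed

lemma dil_dil: "dil s (dil t P) = dil (s * t) P"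
  by (simp add: dil_def image_image)

lemma open_strict:
  assumes "finite I"
  shows "open {x. \<forall>F\<in>I. pair (n F) x > c F}"
proof -
  have "{x. \<forall>F\<in>I. pair (n F) x > c F} = (\<Inter>F\<in>I. {x. inner (lat (n F)) x > c F})"
    by (auto simp: pair_inner)
  then show ?thesis using assms by (simp add: open_INT open_halfspace_gt)
qed



lemma comb:
  fixes P :: "(real ^ 'd) set" and a :: nat
  assumes pres: "P = {x. \<forall>F\<in>I. pair (n F) x \<ge> - real_of_int (h F)}"
    and a1: "a \<ge> 1"
    and decomp: "P = minkowski_sum (lfloor_poly (dil (real a) P)) (remainder_poly I n h a)"
    and nz: "\<forall>F\<in>I. lat (n F) \<noteq> 0"
    and M: "M \<ge> real a * (real CARD('d) + 1)"
    and x: "lat zx \<in> dil M P"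
  shows "\<exists>zy. (\<forall>F\<in>I. pair (n F) (lat zy) > - M * real_of_int (h F)) \<and>
              (\<forall>F\<in>I. pair (n F) (lat zx - lat zy) \<ge> -1)"
proof -
  define L1 where "L1 = interior (dil (real a) P) \<inter> lattice_points"
  define R where "R = {x \<in> lattice_points. \<forall>F\<in>I. pair (n F) x \<ge> real_of_int ((int a - 1) * h F - 1)}"
  have D: "P = minkowski_sum (convex hull L1) (convex hull R)"
    using decomp[unfolded lfloor_poly_def remainder_poly_def] unfolding L1_def R_def .
  have ms: "minkowski_sum A B = A + B" for A B :: "(real ^ 'd) set"
    by (auto simp: minkowski_sum_def set_plus_def)
  have PW: "P = convex hull (L1 + R)"
    using D unfolding ms convex_hull_set_plus .
  have WP: "L1 + R \<subseteq> P" using hull_subset[of "L1 + R" convex] PW by simp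
  have Mpos: "M > 0" proof -
    have "real a * (real CARD('d) + 1) > 0" using a1 by simp
    then show ?thesis using M by linarith
  qed
  define x where "x = lat zx"
  define p where "p = (1/M) *\<^sub>R x"
  have xp: "x = M *\<^sub>R p" using Mpos by (simp add: p_def)
  have pP: "p \<in> P"
  proof -
    obtain p' where "p' \<in> P" "x = M *\<^sub>R p'" using x unfolding x_def[symmetric] dil_def by auto
    then show ?thesis using Mpos by (simp add: p_def)
  qed
  have "p \<in> convex hull (L1 + R)" using pP PW by simp
  then have "\<exists>S. finite S \<and> S \<subseteq> L1 + R \<and> card S \<le> DIM(real ^ 'd) + 1 \<and> p \<in> convex hull S"
    by (subst (asm) caratheodory) blast
  then obtain S where S: "finite S" "S \<subseteq> L1 + R" "card S \<le> CARD('d) + 1" "p \<in> convex hull S"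
    by auto
  obtain u where u: "\<forall>w\<in>S. 0 \<le> u w" "sum u S = 1" "(\<Sum>w\<in>S. u w *\<^sub>R w) = p"
    using S(1,4) convex_hull_finite[of S] by auto
  have Sne: "S \<noteq> {}" using u(2) by auto
  obtain w1 where w1: "w1 \<in> S" "u w1 \<ge> 1 / (real CARD('d) + 1)"
  proof (rule ccontr)
    assume "\<not> thesis"
    then have lt: "\<forall>w\<in>S. u w < 1 / (real CARD('d) + 1)" using that by force
    have "sum u S < (\<Sum>w\<in>S. 1 / (real CARD('d) + 1))"
      using sum_strict_mono[OF S(1) Sne, of u "\<lambda>_. 1 / (real CARD('d) + 1)"] lt by simp
    also have "\<dots> = real (card S) / (real CARD('d) + 1)" by simp
    also have "\<dots> \<le> 1" using S(3) by (simp add: divide_le_eq_1)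
    finally show False using u(2) by simp
  qed
  have Mu: "M * u w1 \<ge> real a"
  proof -
    have "real a = real a * (real CARD('d) + 1) * (1 / (real CARD('d) + 1))" by simp
    also have "\<dots> \<le> M * u w1" using M w1(2) Mpos by (intro mult_mono) auto
    finally show ?thesis .
  qed
  obtain q b where qb: "q \<in> L1" "b \<in> R" "w1 = q + b" using S(2) w1(1) by (auto simp: set_plus_def)
  obtain zq where zq: "q = lat zq" using qb(1) by (auto simp: L1_def lattice_points_def)
  obtain zb where zb: "b = lat zb" using qb(2) by (auto simp: R_def lattice_points_def)
  define zy where "zy = zx - zb - (int a - 1) *s (zq + zb)"
  have lzy: "lat zy = x - b - (real a - 1) *\<^sub>R w1"
    by (simp add: zy_def lat_diff lat_add lat_smult x_def zq zb qb(3) of_nat_diff algebra_simps)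
  have a0: "real a > 0" using a1 by simp
  show ?thesis
  proof (intro exI conjI ballI)
    fix F assume F: "F \<in> I"
    define hh where "hh = real_of_int (h F)"
    define pr where "pr = (\<lambda>v. pair (n F) v)"
    have prlin: "pr (v1 + v2) = pr v1 + pr v2" "pr (v1 - v2) = pr v1 - pr v2" "pr (c *\<^sub>R v1) = c * pr v1"
      for v1 v2 c by (simp_all add: pr_def pair_inner inner_add_right inner_diff_right)
    have inP: "v \<in> P \<Longrightarrow> pr v \<ge> - hh" for v using pres F by (auto simp: pr_def hh_def)
    have wS: "w \<in> S \<Longrightarrow> pr w \<ge> - hh" for w using S(2) WP inP by blast
    have pw1: "pr w1 \<ge> -hh" using wS w1(1) .
    have pb: "pr b \<ge> (real a - 1) * hh - 1" using qb(2) F by (auto simp: R_def pr_def hh_def)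
    have "dil (real a) P \<subseteq> {y. - real a * hh \<le> pair (n F) y}" using dil_char[OF pres a0] F hh_def by auto
    then have pq: "pr q > - real a * hh" using interior_strict[of "n F" q] nz F qb(1)
      unfolding L1_def pr_def by auto
    have ppsum: "pr p = (\<Sum>w\<in>S. u w * pr w)" using u(3)[symmetric]
      by (simp add: pr_def pair_inner inner_sum_right)
    have rem: "(\<Sum>w\<in>S - {w1}. u w * pr w) \<ge> (\<Sum>w\<in>S - {w1}. u w * (- hh))"
      using wS u(1) by (intro sum_mono mult_left_mono) auto
    have "(\<Sum>w\<in>S - {w1}. u w * (- hh)) = - hh * (\<Sum>w\<in>S - {w1}. u w)"
      by (simp add: sum_distrib_left sum_negf mult.commute)
    also have "(\<Sum>w\<in>S - {w1}. u w) = 1 - u w1" using u(2) sum.remove[OF S(1) w1(1), of u] by simp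
    finally have rem2: "(\<Sum>w\<in>S - {w1}. u w * pr w) \<ge> - hh * (1 - u w1)" using rem by simp
    have sp: "pr p = u w1 * pr w1 + (\<Sum>w\<in>S - {w1}. u w * pr w)"
      using ppsum sum.remove[OF S(1) w1(1), of "\<lambda>w. u w * pr w"] by simp
    have k1: "(M * u w1 - real a) * pr w1 \<ge> (M * u w1 - real a) * (- hh)"
      using Mu pw1 by (intro mult_left_mono) auto
    have k2: "M * (\<Sum>w\<in>S - {w1}. u w * pr w) \<ge> M * (- hh * (1 - u w1))"
      using rem2 Mpos by (intro mult_left_mono) auto
    have main: "M * pr p - real a * pr w1 \<ge> - (M - real a) * hh"
      using k1 k2 sp by (simp add: algebra_simps)
    have "lat zy = q + (M *\<^sub>R p - real a *\<^sub>R w1)"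
      using lzy xp qb(3) by (simp add: algebra_simps)
    then have "pr (lat zy) = pr q + (M * pr p - real a * pr w1)"
      by (simp add: prlin)
    then show "pair (n F) (lat zy) > - M * real_of_int (h F)"
      using main pq unfolding pr_def[symmetric] hh_def[symmetric] by (simp add: algebra_simps)
    have "lat zx - lat zy = b + (real a - 1) *\<^sub>R w1"
      using lzy x_def by (simp add: algebra_simps)
    then have "pr (lat zx - lat zy) = pr b + (real a - 1) * pr w1"
      by (simp add: prlin)
    moreover have "(real a - 1) * pr w1 \<ge> (real a - 1) * (- hh)"
      using pw1 a1 by (intro mult_left_mono) auto
    ultimately show "pair (n F) (lat zx - lat zy) \<ge> -1"
      using pb unfolding pr_def[symmetric] by (simp add: algebra_simps)
  qed
qed



lemma int_sub_mon: "ehr_interior Q \<subseteq> ehr_monoid Q"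
  unfolding ehr_interior_def ehr_monoid_def using interior_subset by fastforce

definition shiftmap :: "int ^ 'd \<Rightarrow> 'k::field \<Rightarrow> ('d mon \<Rightarrow> 'k) \<Rightarrow> ('d mon \<Rightarrow> 'k)" where
  "shiftmap c r f = (\<lambda>(z, k). r * f (z - c, k))"

lemma hom_shift:
  fixes Q :: "(real ^ 'd) set" and c :: "int ^ 'd" and r :: "'k::field"
  assumes H: "\<forall>w\<in>ehr_interior Q. (fst w + c, snd w) \<in> ehr_monoid Q"
  shows "shiftmap c r \<in> hom_omega TYPE('k) Q"
  unfolding hom_omega_def
proof (intro CollectI conjI ballI)
  fix f :: "'d mon \<Rightarrow> 'k" assume f: "f \<in> canonical_module TYPE('k) Q"
  have fin: "finite (supp f)" and sub: "supp f \<subseteq> ehr_interior Q"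
    using f by (auto simp: canonical_module_def ehrhart_ring_def)
  have ss: "supp (shiftmap c r f) \<subseteq> (\<lambda>u. (fst u + c, snd u)) ` supp f"
  proof
    fix u assume "u \<in> supp (shiftmap c r f)"
    then obtain z k where u: "u = (z, k)" "f (z - c, k) \<noteq> 0"
      by (cases u) (auto simp: supp_def shiftmap_def)
    then have "(z - c, k) \<in> supp f" by (simp add: supp_def)
    moreover have "u = (fst (z - c, k) + c, snd (z - c, k))" using u by simp
    ultimately show "u \<in> (\<lambda>u. (fst u + c, snd u)) ` supp f" by blast
  qed
  have "(\<lambda>u. (fst u + c, snd u)) ` supp f \<subseteq> ehr_monoid Q" using sub H by auto
  then show "shiftmap c r f \<in> ehrhart_ring TYPE('k) Q"
    unfolding ehrhart_ring_def using ss fin finite_subset by blast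
next
  fix f g :: "'d mon \<Rightarrow> 'k"
  show "shiftmap c r (\<lambda>u. f u + g u) = (\<lambda>u. shiftmap c r f u + shiftmap c r g u)"
    by (auto simp: shiftmap_def distrib_left)
next
  fix a f :: "'d mon \<Rightarrow> 'k"
  show "shiftmap c r (conv a f) = conv a (shiftmap c r f)"
    by (auto simp: shiftmap_def conv_def sum_distrib_left algebra_simps intro!: sum.cong)
qed

definition mono1 :: "'d mon \<Rightarrow> ('d mon \<Rightarrow> 'k::field)" where
  "mono1 v = (\<lambda>u. if u = v then 1 else 0)"

lemma mono1_can:
  fixes Q :: "(real ^ 'd) set" and v :: "'d mon"
  assumes v: "v \<in> ehr_interior Q"
  shows "mono1 v \<in> canonical_module TYPE('k::field) Q"
proof -
  have "supp (mono1 v :: 'd mon \<Rightarrow> 'k) = {v}" by (auto simp: supp_def mono1_def)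
  then show ?thesis using v int_sub_mon
    by (auto simp: canonical_module_def ehrhart_ring_def)
qed

lemma shift_mono1: "shiftmap c r (mono1 v) = (\<lambda>u. if u = (fst v + c, snd v) then r else 0)"
  by (auto simp: shiftmap_def mono1_def fun_eq_iff)

lemma trace_lemma:
  fixes Q :: "(real ^ 'd) set" and f :: "'d mon \<Rightarrow> 'k::field"
  assumes fin: "finite (supp f)"
    and H: "\<forall>u\<in>supp f. \<exists>v c. v \<in> ehr_interior Q \<and> u = (fst v + c, snd v) \<and>
               (\<forall>w\<in>ehr_interior Q. (fst w + c, snd w) \<in> ehr_monoid Q)"
  shows "f \<in> trace_omega TYPE('k) Q"
proof -
  obtain V C where VC: "\<forall>u\<in>supp f. V u \<in> ehr_interior Q \<and> u = (fst (V u) + C u, snd (V u)) \<and>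
               (\<forall>w\<in>ehr_interior Q. (fst w + C u, snd w) \<in> ehr_monoid Q)"
    using H by metis
  obtain g where g: "bij_betw g {..<card (supp f)} (supp f)"
    using ex_bij_betw_nat_finite[OF fin] atLeast0LessThan by auto
  define m where "m = card (supp f)"
  define phis where "phis = (\<lambda>i. shiftmap (C (g i)) (f (g i)))"
  define fs where "fs = (\<lambda>i. mono1 (V (g i)) :: 'd mon \<Rightarrow> 'k)"
  have gi: "i < m \<Longrightarrow> g i \<in> supp f" for i using g m_def by (auto simp: bij_betw_def)
  have P1: "\<forall>i<m. phis i \<in> hom_omega TYPE('k) Q \<and> fs i \<in> canonical_module TYPE('k) Q"
    using gi VC by (auto simp: phis_def fs_def intro!: hom_shift mono1_can)
  have ev: "i < m \<Longrightarrow> phis i (fs i) = (\<lambda>u. if u = g i then f (g i) else 0)" for i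
    using gi[of i] VC by (auto simp: phis_def fs_def shift_mono1)
  have "f = (\<lambda>u. \<Sum>i<m. phis i (fs i) u)"
  proof
    fix u
    have "(\<Sum>i<m. phis i (fs i) u) = (\<Sum>i<m. if u = g i then f (g i) else 0)"
      using ev by (intro sum.cong) auto
    also have "\<dots> = (\<Sum>w\<in>supp f. if u = w then f w else 0)"
      using sum.reindex_bij_betw[OF g, of "\<lambda>w. if u = w then f w else 0"] m_def by simp
    also have "\<dots> = f u" using fin by (cases "u \<in> supp f") (auto simp: supp_def)
    finally show "f u = (\<Sum>i<m. phis i (fs i) u)" by simp
  qed
  then show ?thesis unfolding trace_omega_def using P1 by blast
qed



theorem theorem3p8:
  fixes P :: "(real ^ 'd) set"
    and I :: "'f set" and n :: "'f \<Rightarrow> int ^ 'd" and h :: "'f \<Rightarrow> int"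
  assumes infinite_field: "infinite (UNIV :: 'k::field set)"
    and lp: "lattice_polytope P"
    and full_dim: "interior P \<noteq> {}"
    and finI: "finite I"
    and pres: "P = {x. \<forall>F\<in>I. pair (n F) x \<ge> - real_of_int (h F)}"
    and prim: "\<forall>F\<in>I. primitive (n F)"
    and facets: "\<forall>F\<in>I. {x \<in> P. pair (n F) x = - real_of_int (h F)} facet_of P"
    and decomp: "P = minkowski_sum (lfloor_poly (dil (real (codegree P)) P))
                                   (remainder_poly I n h (codegree P))"
  shows "\<exists>K::nat. K \<ge> 1 \<and> (\<forall>k::nat. k \<ge> K \<longrightarrow> nearly_gorenstein TYPE('k) (dil (real k) P))"
proof -
  define a where "a = codegree P"
  have nz: "\<forall>F\<in>I. lat (n F) \<noteq> 0" using prim prim_nz by blast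
  have a1: "a \<ge> 1"
  proof (rule ccontr)
    assume "\<not> a \<ge> 1"
    then have a0: "a = 0" by simp
    have Pne: "P \<noteq> {}" using full_dim interior_subset by blast
    have "dil (real a) P = {0}" using a0 Pne by (auto simp: dil_def)
    then have "lfloor_poly (dil (real a) P) = {}" by (simp add: lfloor_poly_def)
    then have "P = {}" using decomp unfolding a_def[symmetric] by (simp add: minkowski_sum_def)
    then show False using Pne by simp
  qed
  define K where "K = a * (CARD('d) + 1)"
  have K1: "K \<ge> 1" using a1 by (simp add: K_def)
  have decomp': "P = minkowski_sum (lfloor_poly (dil (real a) P)) (remainder_poly I n h a)"
    using decomp unfolding a_def .
  show ?thesis
  proof (intro exI conjI allI impI)
    show "K \<ge> 1" by (rule K1)
    fix k :: nat assume kK: "k \<ge> K"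
    define Q where "Q = dil (real k) P"
    have kpos: "real k > 0" using kK K1 by simp
    have QM: "dil (real_of_int j) Q = dil (real_of_int j * real k) P" for j
      by (simp add: Q_def dil_dil)
    have inter_ineq: "w \<in> ehr_interior Q \<Longrightarrow> F \<in> I \<Longrightarrow>
        pair (n F) (lat (fst w)) \<ge> - (real_of_int (snd w) * real k) * real_of_int (h F) + 1" for w F
    proof -
      assume w: "w \<in> ehr_interior Q" and F: "F \<in> I"
      obtain z' j' where zj: "w = (z', j')" by (cases w)
      have j1: "j' \<ge> 1" and zi: "lat z' \<in> interior (dil (real_of_int j' * real k) P)"
        using w zj QM by (auto simp: ehr_interior_def)
      have Mp: "real_of_int j' * real k > 0" using j1 kpos by simp
      have "dil (real_of_int j' * real k) P \<subseteq>
          {y. - (real_of_int j' * real k) * real_of_int (h F) \<le> pair (n F) y}"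
        using dil_char[OF pres Mp] F by auto
      then have st: "pair (n F) (lat z') > - (real_of_int j' * real k) * real_of_int (h F)"
        using interior_strict[OF _ zi] nz F by blast
      define A where "A = (\<Sum>i\<in>UNIV. n F $ i * z' $ i)"
      have "real_of_int A > real_of_int (- (j' * int k * h F))"
        using st by (simp add: A_def pair_lat)
      then have "A \<ge> - (j' * int k * h F) + 1" by linarith
      then have "real_of_int A \<ge> real_of_int (- (j' * int k * h F) + 1)" by linarith
      then show ?thesis using zj by (simp add: A_def pair_lat)
    qed
    show "nearly_gorenstein TYPE('k) (dil (real k) P)"
      unfolding nearly_gorenstein_def Q_def[symmetric]
    proof
      fix f :: "'d mon \<Rightarrow> 'k" assume f: "f \<in> max_ideal TYPE('k) Q"
      have fin: "finite (supp f)" using f by (simp add: max_ideal_def ehrhart_ring_def)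
      show "f \<in> trace_omega TYPE('k) Q"
      proof (rule trace_lemma[OF fin], intro ballI)
        fix u assume u: "u \<in> supp f"
        obtain z j where zj: "u = (z, j)" by (cases u)
        have j1: "j \<ge> 1" using f u zj by (auto simp: max_ideal_def)
        have "u \<in> ehr_monoid Q" using f u by (auto simp: max_ideal_def ehrhart_ring_def)
        then have zM: "lat z \<in> dil (real_of_int j * real k) P" using zj QM by (simp add: ehr_monoid_def)
        define M where "M = real_of_int j * real k"
        have MK: "M \<ge> real a * (real CARD('d) + 1)"
        proof -
          have "real a * (real CARD('d) + 1) = real K" by (simp add: K_def algebra_simps)
          also have "\<dots> \<le> real k" using kK by simp
          also have "\<dots> \<le> M" unfolding M_def using j1 kpos
            using mult_right_mono[of 1 "real_of_int j" "real k"] by simp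
          finally show ?thesis .
        qed
        have Mpos: "M > 0" using j1 kpos M_def by simp
        obtain zy where zy: "\<forall>F\<in>I. pair (n F) (lat zy) > - M * real_of_int (h F)"
            "\<forall>F\<in>I. pair (n F) (lat z - lat zy) \<ge> -1"
          using comb[OF pres a1 decomp' nz MK, of z] zM M_def by blast
        define c where "c = z - zy"
        have open1: "open {x. \<forall>F\<in>I. pair (n F) x > - M * real_of_int (h F)}"
          by (rule open_strict[OF finI])
        have sub1: "{x. \<forall>F\<in>I. pair (n F) x > - M * real_of_int (h F)} \<subseteq> dil M P"
          using dil_char[OF pres Mpos] by fastforce
        have "lat zy \<in> interior (dil M P)"
          using interior_maximal[OF sub1 open1] zy(1) by blast
        then have vI: "(zy, j) \<in> ehr_interior Q"
          using j1 QM M_def by (simp add: ehr_interior_def)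
        have uv: "u = (fst (zy, j) + c, snd (zy, j))" using zj c_def by simp
        have shiftok: "\<forall>w\<in>ehr_interior Q. (fst w + c, snd w) \<in> ehr_monoid Q"
        proof
          fix w assume w: "w \<in> ehr_interior Q"
          obtain z' j' where wj: "w = (z', j')" by (cases w)
          have j1': "j' \<ge> 1" using w wj by (simp add: ehr_interior_def)
          have Mp': "real_of_int j' * real k > 0" using j1' kpos by simp
          have "\<forall>F\<in>I. pair (n F) (lat (z' + c)) \<ge> - (real_of_int j' * real k) * real_of_int (h F)"
          proof
            fix F assume F: "F \<in> I"
            have "pair (n F) (lat (z' + c)) = pair (n F) (lat z') + pair (n F) (lat z - lat zy)"
              by (simp add: c_def lat_add lat_diff pair_inner inner_add_right)
            then show "pair (n F) (lat (z' + c)) \<ge> - (real_of_int j' * real k) * real_of_int (h F)"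
              using inter_ineq[OF w F] wj zy(2) F by force
          qed
          then have "lat (z' + c) \<in> dil (real_of_int j' * real k) P"
            using dil_char[OF pres Mp'] by blast
          then show "(fst w + c, snd w) \<in> ehr_monoid Q"
            using wj j1' QM by (simp add: ehr_monoid_def)
        qed
        show "\<exists>v c. v \<in> ehr_interior Q \<and> u = (fst v + c, snd v) \<and>
               (\<forall>w\<in>ehr_interior Q. (fst w + c, snd w) \<in> ehr_monoid Q)"
          using vI uv shiftok by blast
      qed
    qed
  qed
qed

end
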